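(* Let $a_2,a_3,b_2,b_3$ be nonzero real numbers satisfying one of the following conditions: (I) $a_2b_3\neq a_3b_2$ and $a_2b_2\neq -a_3b_3$; (II) $a_2b_3=a_3b_2$ and $|a_2|\neq|a_3|$; (III) $a_2b_3=a_3b_2$ and $a_2=a_3$. Let $\xi_1,\xi_2,\xi_3,\xi_4$ be independent real-valued random variables whose characteristic functions vanish nowhere on $\mathbb{R}$, with $\xi_2$ and $\xi_3$ identically distributed, and put $L_1=\xi_1+a_2\xi_2+a_3\xi_3$, $L_2=b_2\xi_2+b_3\xi_3+\xi_4$. Let $\eta_1,\eta_2,\eta_3,\eta_4$ be any independent real-valued random variables whose characteristic functions vanish nowhere, with $\eta_2$ and $\eta_3$ identically distributed, and put $M_1=\eta_1+a_2\eta_2+a_3\eta_3$, $M_2=b_2\eta_2+b_3\eta_3+\eta_4$. If $(L_1,L_2)$ and $(M_1,M_2)$ have the same distribution, then there exist real numbers $\alpha_1,\dots,\alpha_4$ such that for each $j=1,2,3,4$ the distribution of $\eta_j$ equals that of $\xi_j+\alpha_j$. *)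

theory Defs
  imports "HOL-Probability.Probability"
begin

end

theory Submission
  imports Defs "HOL-Probability.Probability" "HOL-Analysis.Analysis"
begin

lemma cauchy_cont:
  fixes f :: "real \<Rightarrow> real"
  assumes c: "continuous_on UNIV f" and add: "\<And>x y. f (x + y) = f x + f y"
  shows "f x = f 1 * x"
proof -
  have f0: "f 0 = 0" using add[of 0 0] by simp
  have fneg: "f (-y) = - f y" for y using add[of y "-y"] f0 by simp
  have fnat: "f (real n * y) = real n * f y" for n y
  proof (induction n)
    case 0
    then show ?case using f0 by simp
  next
    case (Suc n)
    have "real (Suc n) * y = real n * y + y" by (simp add: algebra_simps)
    then have "f (real (Suc n) * y) = f (real n * y) + f y" using add by simp
    also have "\<dots> = real (Suc n) * f y" using Suc.IH by (simp add: algebra_simps)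
    finally show ?case .
  qed
  have fint: "f (real_of_int m * y) = real_of_int m * f y" for m y
  proof (cases "m \<ge> 0")
    case True
    then have "real_of_int m = real (nat m)" by simp
    then show ?thesis using fnat[of "nat m" y] by (simp only:)
  next
    case False
    then have "real_of_int m = - real (nat (-m))" by simp
    then have "f (real_of_int m * y) = f (- (real (nat (-m)) * y))" by (simp only: mult_minus_left)
    also have "\<dots> = - (real (nat (-m)) * f y)" by (simp only: fneg fnat)
    also have "\<dots> = real_of_int m * f y" by (simp only: \<open>real_of_int m = - real (nat (-m))\<close> mult_minus_left)
    finally show ?thesis .
  qed
  have frat: "f q = f 1 * q" if qR: "q \<in> \<rat>" for q
  proof -
    obtain a b where ab0: "b > 0" "coprime a b" "q = of_int a / of_int b" by (rule Rats_cases'[OF qR])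
    then have ab: "b > 0" "q = of_int a / of_int b" by simp_all
    have bq: "real_of_int b * q = real_of_int a * 1" using ab by simp
    have "real_of_int b * f q = f (real_of_int b * q)" by (simp only: fint)
    also have "\<dots> = f (real_of_int a * 1)" by (simp only: bq)
    also have "\<dots> = real_of_int a * f 1" by (rule fint)
    finally have "real_of_int b * f q = real_of_int a * f 1" .
    then have "f q = real_of_int a * f 1 / real_of_int b" using ab(1) by (simp add: field_simps)
    then show ?thesis using ab by simp
  qed
  have cl: "closed {x. f x = f 1 * x}"
    by (rule closed_Collect_eq) (auto intro!: continuous_intros c)
  have "\<rat> \<subseteq> {x. f x = f 1 * x}" using frat by blast
  then have "closure \<rat> \<subseteq> {x. f x = f 1 * x}" using cl by (rule closure_minimal)
  then have "x \<in> {x. f x = f 1 * x}" unfolding Rats_closure_real by blast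
  then show ?thesis by simp
qed

lemma core_I:
  fixes p1 p p4 :: "real \<Rightarrow> real"
  assumes cont: "continuous_on UNIV p"
    and p0: "p 0 = 0"
    and eq: "\<And>s t. p1 s + p (a2 * s + b2 * t) + p (a3 * s + b3 * t) + p4 t = 0"
    and nz: "a2 \<noteq> 0" "b2 \<noteq> 0"
    and Dn: "a2 * b3 \<noteq> a3 * b2" and Sn: "a2 * b2 \<noteq> -(a3 * b3)"
  shows "p x = p 1  *  x"
proof -
  define D where "D u h k = p (u+h+k) - p (u+h) - p (u+k) + p u" for u h k
  have st1: "D (a2 * s+b2 * t) (a2 * \<sigma>) (b2 * \<tau>) + D (a3 * s+b3 * t) (a3 * \<sigma>) (b3 * \<tau>) = 0" for s t \<sigma> \<tau>
  proof -
    have e1: "a2 * (s+\<sigma>) + b2 * (t+\<tau>) = (a2 * s+b2 * t) + a2 * \<sigma> + b2 * \<tau>"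
             "a3 * (s+\<sigma>) + b3 * (t+\<tau>) = (a3 * s+b3 * t) + a3 * \<sigma> + b3 * \<tau>"
             "a2 * (s+\<sigma>) + b2 * t = (a2 * s+b2 * t) + a2 * \<sigma>"
             "a3 * (s+\<sigma>) + b3 * t = (a3 * s+b3 * t) + a3 * \<sigma>"
             "a2 * s + b2 * (t+\<tau>) = (a2 * s+b2 * t) + b2 * \<tau>"
             "a3 * s + b3 * (t+\<tau>) = (a3 * s+b3 * t) + b3 * \<tau>"
      by (simp_all add: algebra_simps)
    have "p1 (s+\<sigma>) + p (a2 * (s+\<sigma>) + b2 * (t+\<tau>)) + p (a3 * (s+\<sigma>) + b3 * (t+\<tau>)) + p4 (t+\<tau>) = 0"
         "p1 (s+\<sigma>) + p (a2 * (s+\<sigma>) + b2 * t) + p (a3 * (s+\<sigma>) + b3 * t) + p4 t = 0"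
         "p1 s + p (a2 * s + b2 * (t+\<tau>)) + p (a3 * s + b3 * (t+\<tau>)) + p4 (t+\<tau>) = 0"
         "p1 s + p (a2 * s + b2 * t) + p (a3 * s + b3 * t) + p4 t = 0"
      by (rule eq)+
    then show ?thesis unfolding D_def e1 by linarith
  qed
  define Dt where "Dt = a2 * b3 - a3 * b2"
  have Dt0: "Dt \<noteq> 0" using Dn by (simp add: Dt_def)
  have st2: "D u (a2 * \<sigma>) (b2 * \<tau>) + D v (a3 * \<sigma>) (b3 * \<tau>) = 0" for u v \<sigma> \<tau>
  proof -
    define s where "s = (b3 * u - b2 * v)/Dt"
    define t where "t = (a2 * v - a3 * u)/Dt"
    have "a2 * s+b2 * t = (a2 * (b3 * u - b2 * v) + b2 * (a2 * v - a3 * u))/Dt"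
      using Dt0 by (simp add: s_def t_def field_simps)
    also have "\<dots> = Dt * u / Dt" by (simp add: Dt_def algebra_simps)
    finally have h1: "a2 * s+b2 * t = u" using Dt0 by simp
    have "a3 * s+b3 * t = (a3 * (b3 * u - b2 * v) + b3 * (a2 * v - a3 * u))/Dt"
      using Dt0 by (simp add: s_def t_def field_simps)
    also have "\<dots> = Dt * v / Dt" by (simp add: Dt_def algebra_simps)
    finally have h2: "a3 * s+b3 * t = v" using Dt0 by simp
    note h1 h2
    then show ?thesis using st1[of s t \<sigma> \<tau>] by simp
  qed
  have st3: "D x h k = D 0 h k" for x h k
    using st2[of x "h/a2" "k/b2" 0] st2[of 0 "h/a2" "k/b2" 0] nz by simp
  define B where "B h k = p (h+k) - p h - p k" for h k
  have BD: "D x h k = B h k" for x h k using st3[of x h k] p0 by (simp add: D_def B_def)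
  have Bsym: "B h k = B k h" for h k by (simp add: B_def add.commute)
  have Badd: "B (h1+h2) k = B h1 k + B h2 k" for h1 h2 k
    using BD[of h2 h1 k] unfolding D_def B_def by (simp add: algebra_simps)
  have Bc: "continuous_on UNIV (\<lambda>h. B h k)" for k
    unfolding B_def by (intro continuous_intros continuous_on_compose2[OF cont]) auto
  have B1: "B h k = B 1 k  *  h" for h k
    by (rule cauchy_cont[OF Bc Badd])
  have B2: "B 1 k = B 1 1  *  k" for k
  proof (rule cauchy_cont[where f = "\<lambda>k. B 1 k", simplified])
    show "continuous_on UNIV (B 1)" using Bc[of 1] Bsym by (simp add: Bsym[of 1])
    show "B 1 (x + y) = B 1 x + B 1 y" for x y using Badd[of x y 1] Bsym by metis
  qed
  have "B 1 1  *  (a2 * b2 + a3 * b3) = 0"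
  proof -
    have "B a2 b2 + B a3 b3 = 0" using st2[of 0 1 1 0] BD[of 0 a2 b2] BD[of 0 a3 b3] by simp
    moreover have "B a2 b2 = B 1 1 * b2 * a2" using B1[of a2 b2] B2[of b2] by simp
    moreover have "B a3 b3 = B 1 1 * b3 * a3" using B1[of a3 b3] B2[of b3] by simp
    ultimately show ?thesis by (simp add: algebra_simps)
  qed
  then have "B 1 1 = 0" using Sn by auto
  then have padd: "p (h+k) = p h + p k" for h k using B1[of h k] B2[of k] unfolding B_def by simp
  show ?thesis by (rule cauchy_cont[OF cont padd])
qed

lemma core_II:
  fixes p1 p p4 :: "real \<Rightarrow> real"
  assumes cont: "continuous_on UNIV p"
    and p0: "p 0 = 0" and p10: "p1 0 = 0" and p40: "p4 0 = 0"
    and eq: "\<And>s t. p1 s + p (a2 * s + b2 * t) + p (a3 * s + b3 * t) + p4 t = 0"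
    and nz: "a2 \<noteq> 0" "b2 \<noteq> 0"
    and Dn: "a2 * b3 = a3 * b2" and cases: "\<bar>a2\<bar> \<noteq> \<bar>a3\<bar> \<or> a2 = a3"
  shows "p x = p 1 * x"
proof -
  define c where "c = a3 / a2"
  have a3: "a3 = c * a2" using nz by (simp add: c_def)
  have b3: "b3 = c * b2" using nz Dn by (simp add: c_def field_simps)
  define chi where "chi x = p x + p (c * x)" for x
  have eq2: "p1 s + chi (a2 * s + b2 * t) + p4 t = 0" for s t
    using eq[of s t] unfolding chi_def a3 b3 by (simp add: algebra_simps)
  have chi_add: "chi (x + y) = chi x + chi y" for x y
  proof -
    have "p1 (x/a2) + chi (x + y) + p4 (y/b2) = 0" using eq2[of "x/a2" "y/b2"] nz by simp
    moreover have "p1 (x/a2) + chi x = 0" using eq2[of "x/a2" 0] nz p40 by simp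
    moreover have "chi y + p4 (y/b2) = 0" using eq2[of 0 "y/b2"] nz p10 by simp
    ultimately show ?thesis by linarith
  qed
  have chi_cont: "continuous_on UNIV chi"
    unfolding chi_def by (intro continuous_intros continuous_on_compose2[OF cont]) auto
  have chi_lin: "chi x = chi 1 * x" for x by (rule cauchy_cont[OF chi_cont chi_add])
  show ?thesis
  proof (cases "c = 1")
    case True
    then have "2 * p x = chi 1 * x" for x using chi_lin[of x] by (simp add: chi_def)
    from this[of x] this[of 1] have "2 * p x = 2 * p 1 * x" by (simp only:)
    then show ?thesis by simp
  next
    case False
    then have "a3 \<noteq> a2" using nz by (auto simp: c_def)
    then have "\<bar>a3\<bar> \<noteq> \<bar>a2\<bar>" using cases by auto
    then have cabs: "\<bar>c\<bar> \<noteq> 1" using nz by (simp add: c_def abs_divide)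
    then have c1: "1 + c \<noteq> 0" by auto
    define \<rho> where "\<rho> x = p x - chi 1 * x / (1 + c)" for x
    have rho_c: "\<rho> x + \<rho> (c * x) = 0" for x
    proof -
      have "\<rho> x + \<rho> (c * x) = chi x - chi 1 * x * (1 + c) / (1 + c)"
        by (simp add: \<rho>_def chi_def add_divide_distrib diff_divide_distrib algebra_simps)
      also have "\<dots> = 0" using c1 chi_lin[of x] by simp
      finally show ?thesis .
    qed
    have rho_c2: "\<rho> (c^2 * x) = \<rho> x" for x
      using rho_c[of x] rho_c[of "c * x"] by (simp add: power2_eq_square mult.assoc)
    have rho_cont: "continuous_on UNIV \<rho>"
      unfolding \<rho>_def using c1 by (intro continuous_intros cont) auto
    have rho0: "\<rho> 0 = 0" by (simp add: \<rho>_def p0)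
    obtain d where d: "\<bar>d\<bar> < 1" "\<And>x. \<rho> (d * x) = \<rho> x"
    proof (cases "\<bar>c\<bar> < 1")
      case True
      have "\<bar>c^2\<bar> < 1" using True by (simp add: abs_square_less_1)
      then show ?thesis using that rho_c2 by blast
    next
      case False
      then have cg: "\<bar>c\<bar> > 1" using cabs by auto
      have "1 * 1 < \<bar>c\<bar> * \<bar>c\<bar>" using cg by (intro mult_strict_mono) auto
      then have "c^2 > 1" by (simp add: power2_eq_square abs_mult_self_eq)
      then have "\<bar>1 / c^2\<bar> < 1" by (simp add: divide_less_eq)
      moreover have "\<rho> (1 / c^2 * x) = \<rho> x" for x
        using rho_c2[of "1 / c^2 * x"] cg by simp
      ultimately show ?thesis using that by blast
    qed
    have dn: "\<rho> (d ^ n * y) = \<rho> y" for n y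
    proof (induction n)
      case (Suc n)
      have "d ^ Suc n * y = d * (d ^ n * y)" by simp
      then show ?case using d(2)[of "d ^ n * y"] Suc.IH by (simp only:)
    qed simp
    have rc0: "isCont \<rho> 0" using rho_cont by (simp add: continuous_on_eq_continuous_at)
    have rz: "\<rho> y = 0" for y
    proof -
      have "(\<lambda>n. d ^ n * y) \<longlonglongrightarrow> 0 * y"
        by (intro tendsto_intros LIMSEQ_power_zero) (use d in \<open>auto\<close>)
      then have "(\<lambda>n. \<rho> (d ^ n * y)) \<longlonglongrightarrow> \<rho> 0"
        using isCont_tendsto_compose[OF rc0] by simp
      then show "\<rho> y = 0" using dn rho0 by (simp add: LIMSEQ_const_iff)
    qed
    have "\<rho> x = 0" "\<rho> 1 = 0" by (rule rz)+
    then have "p x = chi 1 * x / (1 + c)" "p 1 = chi 1 / (1 + c)" unfolding \<rho>_def by simp_all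
    then show ?thesis by simp
  qed
qed

lemma char_distr_eq:
  assumes "prob_space M" "X \<in> borel_measurable M"
  shows "char (distr M borel X) t = (CLINT x|M. iexp (t * X x))"
  using assms by (simp add: char_def integral_distr)

lemma joint_char:
  fixes X :: "nat \<Rightarrow> 'a \<Rightarrow> real"
  assumes P: "prob_space M" and ind: "prob_space.indep_vars M (\<lambda>_. borel) X {1,2,3,4}"
  shows "(CLINT x|M. iexp (s * (X 1 x + a2 * X 2 x + a3 * X 3 x) + t * (b2 * X 2 x + b3 * X 3 x + X 4 x)))
     = char (distr M borel (X 1)) s * char (distr M borel (X 2)) (a2 * s + b2 * t)
       * char (distr M borel (X 3)) (a3 * s + b3 * t) * char (distr M borel (X 4)) t"
proof -
  interpret prob_space M by (rule P)
  define c where "c j = (if j = (1::nat) then s else if j = 2 then a2 * s + b2 * t else if j = 3 then a3 * s + b3 * t else t)" for j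
  have meas: "X j \<in> borel_measurable M" if "j \<in> {1,2,3,4}" for j
    using ind that unfolding indep_vars_def by auto
  have ind2: "indep_vars (\<lambda>_. borel) (\<lambda>j x. iexp (c j * X j x)) {1,2,3,4}"
    by (rule indep_vars_compose2[OF ind]) auto
  have int: "integrable M (\<lambda>x. iexp (c j * X j x))" if "j \<in> {1,2,3,4}" for j
    by (rule integrable_iexp) (use meas[OF that] in auto)
  have "(CLINT x|M. iexp (s * (X 1 x + a2 * X 2 x + a3 * X 3 x) + t * (b2 * X 2 x + b3 * X 3 x + X 4 x)))
      = (CLINT x|M. (\<Prod>j\<in>{1,2,3,4}. iexp (c j * X j x)))"
  proof (rule Bochner_Integration.integral_cong[OF refl])
    fix x
    have "s * (X 1 x + a2 * X 2 x + a3 * X 3 x) + t * (b2 * X 2 x + b3 * X 3 x + X 4 x)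
        = c 1 * X 1 x + c 2 * X 2 x + c 3 * X 3 x + c 4 * X 4 x"
      by (simp add: c_def algebra_simps)
    then show "iexp (s * (X 1 x + a2 * X 2 x + a3 * X 3 x) + t * (b2 * X 2 x + b3 * X 3 x + X 4 x))
      = (\<Prod>j\<in>{1,2,3,4}. iexp (c j * X j x))"
      by (simp add: exp_add[symmetric] distrib_left add.assoc)
  qed
  also have "\<dots> = (\<Prod>j\<in>{1,2,3,4}. CLINT x|M. iexp (c j * X j x))"
    by (rule indep_vars_lebesgue_integral[OF _ ind2 int]) auto
  also have "\<dots> = (\<Prod>j\<in>{1,2,3,4}. char (distr M borel (X j)) (c j))"
    by (rule prod.cong[OF refl]) (simp add: char_distr_eq[OF P meas])
  finally show ?thesis by (simp add: c_def mult.assoc)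
qed

lemma cont_log0:
  fixes h :: "real \<Rightarrow> complex"
  assumes c: "continuous_on UNIV h" and nz: "\<And>x. h x \<noteq> 0" and h0: "h 0 = 1"
  obtains \<psi> where "continuous_on UNIV \<psi>" "\<psi> 0 = 0" "\<And>x. h x = exp (\<psi> x)"
proof -
  obtain g where g: "continuous_on UNIV g" "\<And>x. x \<in> UNIV \<Longrightarrow> h x = exp (g x)"
    using continuous_logarithm_on_contractible[OF c contractible_UNIV] nz by metis
  have e0: "exp (g 0) = 1" using g(2)[of 0] h0 by simp
  show ?thesis
  proof
    show "continuous_on UNIV (\<lambda>x. g x - g 0)" by (intro continuous_intros g(1))
    show "g 0 - g 0 = 0" by simp
    show "h x = exp (g x - g 0)" for x using g(2)[of x] e0 by (simp add: exp_diff)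
  qed
qed

lemma exp1_zero:
  fixes G :: "real \<Rightarrow> complex"
  assumes c: "continuous_on UNIV G" and e: "\<And>x. exp (G x) = 1" and z: "G x0 = 0"
  shows "G x = 0"
proof -
  have "G constant_on UNIV"
  proof (rule continuous_discrete_range_constant[OF connected_UNIV c])
    fix x :: real
    show "\<exists>e>0. \<forall>y. y \<in> UNIV \<and> G y \<noteq> G x \<longrightarrow> e \<le> norm (G y - G x)"
    proof (intro exI[of _ "2 * pi"] conjI allI impI)
      fix y assume "y \<in> UNIV \<and> G y \<noteq> G x"
      then have ne: "G y - G x \<noteq> 0" by simp
      have "exp (G y - G x) = 1" using e[of x] e[of y] by (simp add: exp_diff)
      then obtain n :: int where re: "Re (G y - G x) = 0" and im: "Im (G y - G x) = of_int (2 * n) * pi"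
        unfolding exp_eq_1 by blast
      have "n \<noteq> 0" using ne re im by (auto simp: complex_eq_iff)
      then have "1 \<le> \<bar>real_of_int n\<bar>" by linarith
      then have "2 * pi * 1 \<le> 2 * pi * \<bar>real_of_int n\<bar>" by (intro mult_left_mono) auto
      also have "\<dots> = \<bar>Im (G y - G x)\<bar>" using im by (simp add: abs_mult)
      also have "\<dots> \<le> norm (G y - G x)" by (rule abs_Im_le_cmod)
      finally show "2 * pi \<le> norm (G y - G x)" by simp
    qed simp
  qed
  then show ?thesis using z unfolding constant_on_def by (metis UNIV_I)
qed

lemma char_neg:
  assumes "prob_space M" "X \<in> borel_measurable M"
  shows "char (distr M borel X) (-t) = cnj (char (distr M borel X) t)"
proof -
  have "char (distr M borel X) (-t) = (CLINT x|M. cnj (iexp (t * X x)))"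
    unfolding char_distr_eq[OF assms] by (intro Bochner_Integration.integral_cong) (auto simp: exp_cnj)
  also have "\<dots> = cnj (char (distr M borel X) t)"
    unfolding char_distr_eq[OF assms] by simp
  finally show ?thesis .
qed

lemma char_shift:
  assumes "prob_space M" "X \<in> borel_measurable M"
  shows "char (distr M borel (\<lambda>x. X x + a)) t = char (distr M borel X) t * iexp (t * a)"
proof -
  have m: "(\<lambda>x. X x + a) \<in> borel_measurable M" using assms(2) by measurable
  have "char (distr M borel (\<lambda>x. X x + a)) t = (CLINT x|M. iexp (t * X x) * iexp (t * a))"
    unfolding char_distr_eq[OF assms(1) m]
    by (intro Bochner_Integration.integral_cong) (auto simp: exp_add[symmetric] algebra_simps)
  also have "\<dots> = char (distr M borel X) t * iexp (t * a)"
    unfolding char_distr_eq[OF assms] by (rule integral_mult_left_zero)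
  finally show ?thesis .
qed

lemma final_step:
  fixes X :: "'a \<Rightarrow> real" and Y :: "'b \<Rightarrow> real" and \<psi> :: "real \<Rightarrow> complex"
  assumes PM: "prob_space M" and PN: "prob_space N"
    and X: "X \<in> borel_measurable M" and Y: "Y \<in> borel_measurable N"
    and fnz: "\<And>t. char (distr M borel X) t \<noteq> 0"
    and h: "\<And>t. char (distr N borel Y) t / char (distr M borel X) t = exp (\<psi> t)"
    and re: "\<And>t. Re (\<psi> t) = \<beta> * t" and im: "\<And>t. Im (\<psi> t) = \<alpha> * t"
  shows "distr N borel Y = distr M borel (\<lambda>x. X x + \<alpha>)"
proof -
  define f where "f = char (distr M borel X)"
  define g where "g = char (distr N borel Y)"
  have "g (-1) / f (-1) = cnj (g 1 / f 1)"
    unfolding f_def g_def char_neg[OF PM X] char_neg[OF PN Y] by simp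
  then have "norm (exp (\<psi> (-1))) = norm (exp (\<psi> 1))"
    using h[of "-1"] h[of 1] unfolding f_def g_def by (metis complex_mod_cnj)
  then have "exp (- \<beta>) = exp \<beta>" using re[of 1] re[of "-1"] by simp
  then have b0: "\<beta> = 0" by simp
  have psi: "\<psi> t = \<i> * complex_of_real (t * \<alpha>)" for t
    using re[of t] im[of t] b0 by (simp add: complex_eq_iff)
  have m: "(\<lambda>x. X x + \<alpha>) \<in> borel_measurable M" using X by measurable
  have "char (distr N borel Y) = char (distr M borel (\<lambda>x. X x + \<alpha>))"
  proof
    fix t
    have "char (distr N borel Y) t = char (distr M borel X) t * exp (\<psi> t)"
      using h[of t] fnz[of t] by (simp add: field_simps)
    also have "\<dots> = char (distr M borel (\<lambda>x. X x + \<alpha>)) t"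
      unfolding char_shift[OF PM X] psi ..
    finally show "char (distr N borel Y) t = char (distr M borel (\<lambda>x. X x + \<alpha>)) t" .
  qed
  then show ?thesis
    by (intro Levy_uniqueness prob_space.real_distribution_distr PN PM Y m)
qed


lemma core_real:
  fixes pa p pb :: "real \<Rightarrow> real"
  assumes cont: "continuous_on UNIV p"
    and p0: "p 0 = 0" and p10: "pa 0 = 0" and p40: "pb 0 = 0"
    and eq: "\<And>s t. pa s + p (a2 * s + b2 * t) + p (a3 * s + b3 * t) + pb t = 0"
    and nz: "a2 \<noteq> 0" "a3 \<noteq> 0" "b2 \<noteq> 0" "b3 \<noteq> 0"
    and cond: "(a2 * b3 \<noteq> a3 * b2 \<and> a2 * b2 \<noteq> - (a3 * b3))
             \<or> (a2 * b3 = a3 * b2 \<and> \<bar>a2\<bar> \<noteq> \<bar>a3\<bar>)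
             \<or> (a2 * b3 = a3 * b2 \<and> a2 = a3)"
  shows "p x = p 1 * x" "pa x = - (p 1 * (a2 + a3)) * x" "pb x = - (p 1 * (b2 + b3)) * x"
proof -
  have plin: "p y = p 1 * y" for y
  proof (cases "a2 * b3 \<noteq> a3 * b2 \<and> a2 * b2 \<noteq> - (a3 * b3)")
    case True
    then show ?thesis using core_I[OF cont p0 eq nz(1) nz(3)] by blast
  next
    case False
    then have "a2 * b3 = a3 * b2" "\<bar>a2\<bar> \<noteq> \<bar>a3\<bar> \<or> a2 = a3" using cond by auto
    then show ?thesis using core_II[OF cont p0 p10 p40 eq nz(1) nz(3)] by blast
  qed
  show "p x = p 1 * x" by (rule plin)
  show "pa x = - (p 1 * (a2 + a3)) * x"
    using eq[of x 0] plin[of "a2 * x"] plin[of "a3 * x"] p40 by (simp add: algebra_simps)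
  show "pb x = - (p 1 * (b2 + b3)) * x"
    using eq[of 0 x] plin[of "b2 * x"] plin[of "b3 * x"] p10 by (simp add: algebra_simps)
qed

theorem theorem2p2:
  fixes a2 a3 b2 b3 :: real
    and M :: "'a measure" and N :: "'b measure"
    and \<xi> :: "nat \<Rightarrow> 'a \<Rightarrow> real" and \<eta> :: "nat \<Rightarrow> 'b \<Rightarrow> real"
  assumes nz: "a2 \<noteq> 0" "a3 \<noteq> 0" "b2 \<noteq> 0" "b3 \<noteq> 0"
    and cond: "(a2 * b3 \<noteq> a3 * b2 \<and> a2 * b2 \<noteq> - (a3 * b3))
             \<or> (a2 * b3 = a3 * b2 \<and> \<bar>a2\<bar> \<noteq> \<bar>a3\<bar>)
             \<or> (a2 * b3 = a3 * b2 \<and> a2 = a3)"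
    and M: "prob_space M"
    and \<xi>_indep: "prob_space.indep_vars M (\<lambda>_. borel) \<xi> {1, 2, 3, 4}"
    and \<xi>_char: "\<And>j t. j \<in> {1, 2, 3, 4} \<Longrightarrow> char (distr M borel (\<xi> j)) t \<noteq> 0"
    and \<xi>_id: "distr M borel (\<xi> 2) = distr M borel (\<xi> 3)"
    and N: "prob_space N"
    and \<eta>_indep: "prob_space.indep_vars N (\<lambda>_. borel) \<eta> {1, 2, 3, 4}"
    and \<eta>_char: "\<And>j t. j \<in> {1, 2, 3, 4} \<Longrightarrow> char (distr N borel (\<eta> j)) t \<noteq> 0"
    and \<eta>_id: "distr N borel (\<eta> 2) = distr N borel (\<eta> 3)"
    and same: "distr M (borel \<Otimes>\<^sub>M borel)
                 (\<lambda>x. (\<xi> 1 x + a2 * \<xi> 2 x + a3 * \<xi> 3 x, b2 * \<xi> 2 x + b3 * \<xi> 3 x + \<xi> 4 x))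
             = distr N (borel \<Otimes>\<^sub>M borel)
                 (\<lambda>y. (\<eta> 1 y + a2 * \<eta> 2 y + a3 * \<eta> 3 y, b2 * \<eta> 2 y + b3 * \<eta> 3 y + \<eta> 4 y))"
  shows "\<exists>\<alpha> :: nat \<Rightarrow> real. \<forall>j \<in> {1, 2, 3, 4}.
           distr N borel (\<eta> j) = distr M borel (\<lambda>x. \<xi> j x + \<alpha> j)"
proof -
  interpret PM: prob_space M by (rule M)
  interpret PN: prob_space N by (rule N)
  have mx: "\<xi> j \<in> borel_measurable M" if "j \<in> {1,2,3,4}" for j
    using \<xi>_indep that unfolding PM.indep_vars_def by auto
  have my: "\<eta> j \<in> borel_measurable N" if "j \<in> {1,2,3,4}" for j
    using \<eta>_indep that unfolding PN.indep_vars_def by auto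
  note [measurable] = mx[of 1] mx[of 2] mx[of 3] mx[of 4] my[of 1] my[of 2] my[of 3] my[of 4]
  define f where "f j t = char (distr M borel (\<xi> j)) t" for j t
  define g where "g j t = char (distr N borel (\<eta> j)) t" for j t
  define h where "h j t = g j t / f j t" for j t
  have h_cont: "continuous_on UNIV (h j)" if "j \<in> {1,2,3,4}" for j
  proof -
    have "continuous_on UNIV (f j)" unfolding f_def
      by (intro continuous_at_imp_continuous_on ballI real_distribution.isCont_char
          PM.real_distribution_distr mx that)
    moreover have "continuous_on UNIV (g j)" unfolding g_def
      by (intro continuous_at_imp_continuous_on ballI real_distribution.isCont_char
          PN.real_distribution_distr my that)
    ultimately show ?thesis unfolding h_def[abs_def]
      using \<xi>_char[OF that] by (intro continuous_intros) (auto simp: f_def)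
  qed
  have h_nz: "h j t \<noteq> 0" if "j \<in> {1,2,3,4}" for j t
    using \<xi>_char[OF that] \<eta>_char[OF that] by (simp add: h_def f_def g_def)
  have h_0: "h j 0 = 1" if "j \<in> {1,2,3,4}" for j
  proof -
    have "f j 0 = 1" unfolding f_def
      by (intro real_distribution.char_zero PM.real_distribution_distr mx that)
    moreover have "g j 0 = 1" unfolding g_def
      by (intro real_distribution.char_zero PN.real_distribution_distr my that)
    ultimately show ?thesis by (simp add: h_def)
  qed
  have f23: "f 3 = f 2" and g23: "g 3 = g 2" using \<xi>_id \<eta>_id by (simp_all add: f_def[abs_def] g_def[abs_def])
  have key: "f 1 s * f 2 (a2 * s + b2 * t) * f 3 (a3 * s + b3 * t) * f 4 t
           = g 1 s * g 2 (a2 * s + b2 * t) * g 3 (a3 * s + b3 * t) * g 4 t" for s t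
  proof -
    define L where "L x = (\<xi> 1 x + a2 * \<xi> 2 x + a3 * \<xi> 3 x, b2 * \<xi> 2 x + b3 * \<xi> 3 x + \<xi> 4 x)" for x
    define K where "K y = (\<eta> 1 y + a2 * \<eta> 2 y + a3 * \<eta> 3 y, b2 * \<eta> 2 y + b3 * \<eta> 3 y + \<eta> 4 y)" for y
    have Lm: "L \<in> measurable M (borel \<Otimes>\<^sub>M borel)" unfolding L_def by measurable
    have Km: "K \<in> measurable N (borel \<Otimes>\<^sub>M borel)" unfolding K_def by measurable
    have fm: "(\<lambda>p. iexp (s * fst p + t * snd p)) \<in> borel_measurable (borel \<Otimes>\<^sub>M borel)" by measurable
    have "f 1 s * f 2 (a2 * s + b2 * t) * f 3 (a3 * s + b3 * t) * f 4 t
        = (CLINT x|M. iexp (s * fst (L x) + t * snd (L x)))"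
      unfolding f_def L_def using joint_char[OF M \<xi>_indep] by simp
    also have "\<dots> = (CLINT p|distr M (borel \<Otimes>\<^sub>M borel) L. iexp (s * fst p + t * snd p))"
      by (rule integral_distr[OF Lm fm, symmetric])
    also have "distr M (borel \<Otimes>\<^sub>M borel) L = distr N (borel \<Otimes>\<^sub>M borel) K"
      using same unfolding L_def[abs_def] K_def[abs_def] .
    also have "(CLINT p|distr N (borel \<Otimes>\<^sub>M borel) K. iexp (s * fst p + t * snd p))
        = (CLINT y|N. iexp (s * fst (K y) + t * snd (K y)))"
      by (rule integral_distr[OF Km fm])
    also have "\<dots> = g 1 s * g 2 (a2 * s + b2 * t) * g 3 (a3 * s + b3 * t) * g 4 t"
      unfolding g_def K_def using joint_char[OF N \<eta>_indep] by simp
    finally show ?thesis .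
  qed
  obtain \<psi>1 where \<psi>1: "continuous_on UNIV \<psi>1" "\<psi>1 0 = 0" "\<And>x. h 1 x = exp (\<psi>1 x)"
    using cont_log0[OF h_cont h_nz h_0] by (metis insertI1)
  obtain \<psi> where \<psi>: "continuous_on UNIV \<psi>" "\<psi> 0 = 0" "\<And>x. h 2 x = exp (\<psi> x)"
    using cont_log0[OF h_cont h_nz h_0, of 2] by auto
  obtain \<psi>4 where \<psi>4: "continuous_on UNIV \<psi>4" "\<psi>4 0 = 0" "\<And>x. h 4 x = exp (\<psi>4 x)"
    using cont_log0[OF h_cont h_nz h_0, of 4] by auto
  have hprod: "h 1 s * h 2 (a2 * s + b2 * t) * h 2 (a3 * s + b3 * t) * h 4 t = 1" for s t
  proof -
    have nzs: "f 1 s \<noteq> 0" "f 2 (a2 * s + b2 * t) \<noteq> 0" "f 2 (a3 * s + b3 * t) \<noteq> 0" "f 4 t \<noteq> 0"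
      using \<xi>_char by (auto simp: f_def)
    have nzs2: "g 1 s \<noteq> 0" "g 2 (a2 * s + b2 * t) \<noteq> 0" "g 2 (a3 * s + b3 * t) \<noteq> 0" "g 4 t \<noteq> 0"
      using \<eta>_char by (auto simp: g_def)
    show ?thesis using key[of s t] nzs nzs2 unfolding h_def f23 g23 by (simp add: field_simps)
  qed
  define F where "F s t = \<psi>1 s + \<psi> (a2 * s + b2 * t) + \<psi> (a3 * s + b3 * t) + \<psi>4 t" for s t
  have Fexp: "exp (F s t) = 1" for s t
    using hprod[of s t] unfolding F_def \<psi>1(3) \<psi>(3) \<psi>4(3) by (simp add: exp_add)
  have Fc: "continuous_on UNIV (F s)" for s unfolding F_def
    by (intro continuous_intros continuous_on_compose2[OF \<psi>(1)] continuous_on_compose2[OF \<psi>4(1)]) auto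
  have Fc0: "continuous_on UNIV (\<lambda>s. F s 0)" unfolding F_def
    by (intro continuous_intros continuous_on_compose2[OF \<psi>(1)] continuous_on_compose2[OF \<psi>1(1)]) auto
  have Fs0: "F s 0 = 0" for s
    by (rule exp1_zero[OF Fc0 Fexp, of 0]) (simp add: F_def \<psi>1(2) \<psi>(2) \<psi>4(2))
  have F0: "F s t = 0" for s t
    by (rule exp1_zero[OF Fc Fexp Fs0])
  have eqRe: "Re (\<psi>1 s) + Re (\<psi> (a2 * s + b2 * t)) + Re (\<psi> (a3 * s + b3 * t)) + Re (\<psi>4 t) = 0" for s t
    using arg_cong[OF F0[of s t], of Re] by (simp add: F_def)
  have eqIm: "Im (\<psi>1 s) + Im (\<psi> (a2 * s + b2 * t)) + Im (\<psi> (a3 * s + b3 * t)) + Im (\<psi>4 t) = 0" for s t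
    using arg_cong[OF F0[of s t], of Im] by (simp add: F_def)
  have cRe: "continuous_on UNIV (\<lambda>x. Re (\<psi> x))" by (intro continuous_intros \<psi>(1))
  have cIm: "continuous_on UNIV (\<lambda>x. Im (\<psi> x))" by (intro continuous_intros \<psi>(1))
  note R = core_real[where pa = "\<lambda>x. Re (\<psi>1 x)" and p = "\<lambda>x. Re (\<psi> x)" and pb = "\<lambda>x. Re (\<psi>4 x)",
      OF cRe _ _ _ eqRe nz cond, simplified \<psi>1(2) \<psi>(2) \<psi>4(2), simplified]
  note I = core_real[where pa = "\<lambda>x. Im (\<psi>1 x)" and p = "\<lambda>x. Im (\<psi> x)" and pb = "\<lambda>x. Im (\<psi>4 x)",
      OF cIm _ _ _ eqIm nz cond, simplified \<psi>1(2) \<psi>(2) \<psi>4(2), simplified]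
  have fin: "distr N borel (\<eta> j) = distr M borel (\<lambda>x. \<xi> j x + \<alpha>)"
    if "j \<in> {1,2,3,4}" "\<And>t. h j t = exp (ch t)" "\<And>t. Re (ch t) = \<beta> * t" "\<And>t. Im (ch t) = \<alpha> * t"
    for j ch \<beta> \<alpha>
    by (rule final_step[OF M N mx[OF that(1)] my[OF that(1)] \<xi>_char[OF that(1)] _ that(3) that(4)])
       (use that(2) in \<open>simp add: h_def f_def g_def\<close>)
  define \<alpha> where "\<alpha> j = (if j = (1::nat) then - (Im (\<psi> 1) * (a2 + a3))
     else if j = 4 then - (Im (\<psi> 1) * (b2 + b3)) else Im (\<psi> 1))" for j
  have h3: "h 3 = h 2" unfolding h_def[abs_def] f23 g23 ..
  show ?thesis
  proof (intro exI[of _ \<alpha>] ballI)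
    fix j :: nat assume j: "j \<in> {1,2,3,4}"
    then consider "j = 1" | "j = 2" | "j = 3" | "j = 4" by auto
    then show "distr N borel (\<eta> j) = distr M borel (\<lambda>x. \<xi> j x + \<alpha> j)"
    proof cases
      case 1
      have "distr N borel (\<eta> 1) = distr M borel (\<lambda>x. \<xi> 1 x + - (Im (\<psi> 1) * (a2 + a3)))"
        by (rule fin[of 1 \<psi>1 "- (Re (\<psi> 1) * (a2 + a3))", OF _ \<psi>1(3)]) (simp_all add: R(2) I(2))
      then show ?thesis using 1 by (simp add: \<alpha>_def)
    next
      case 2
      have "distr N borel (\<eta> 2) = distr M borel (\<lambda>x. \<xi> 2 x + Im (\<psi> 1))"
        by (rule fin[of 2 \<psi> "Re (\<psi> 1)", OF _ \<psi>(3) R(1) I(1)]) simp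
      then show ?thesis using 2 by (simp add: \<alpha>_def)
    next
      case 3
      have "distr N borel (\<eta> 3) = distr M borel (\<lambda>x. \<xi> 3 x + Im (\<psi> 1))"
        by (rule fin[of 3 \<psi> "Re (\<psi> 1)", OF _ _ R(1) I(1)]) (simp_all add: h3 \<psi>(3))
      then show ?thesis using 3 by (simp add: \<alpha>_def)
    next
      case 4
      have "distr N borel (\<eta> 4) = distr M borel (\<lambda>x. \<xi> 4 x + - (Im (\<psi> 1) * (b2 + b3)))"
        by (rule fin[of 4 \<psi>4 "- (Re (\<psi> 1) * (b2 + b3))", OF _ \<psi>4(3)]) (simp_all add: R(3) I(3))
      then show ?thesis using 4 by (simp add: \<alpha>_def)
    qed
  qed
qed

end
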